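(* Let $f(\mathbf{x}) \in \mathbb{C}[\mathbf{x}]$ be a polynomial that is set-multilinear with respect to a partition $\mathbf{x} = \mathbf{x}_1 \sqcup \cdots \sqcup \mathbf{x}_d$ of its variables. Then the smallest width of a commutative set-multilinear ABP (with respect to this partition) computing $f$ is at most $\mathrm{DPD}(f)$.
   Context: A polynomial is set-multilinear with respect to a partition $\mathbf{x} = \mathbf{x}_1\sqcup\cdots\sqcup\mathbf{x}_d$ if each of its monomials contains exactly one variable from each part $\mathbf{x}_j$ (with degree one). Write $\mathbf{x}_j = \{x_{j,1},\ldots,x_{j,|\mathbf{x}_j|}\}$. A set-multilinear ABP (smABP) of width $w$ computing $f$ consists of a permutation $\sigma$ of $[d]$, matrices $A_{j,k}\in\mathbb{C}^{w\times w}$ for $j\in[d]$, $1\le k\le |\mathbf{x}_j|$, and vectors $\mathbf{u},\mathbf{v}\in\mathbb{C}^w$ such that $f(\mathbf{x}) = \mathbf{u}^T M_{\sigma(1)}(\mathbf{x}_{\sigma(1)})\cdots M_{\sigma(d)}(\mathbf{x}_{\sigma(d)})\mathbf{v}$, where $M_j(\mathbf{x}_j) = \sum_{k=1}^{|\mathbf{x}_j|} A_{j,k} x_{j,k}$; the $A_{j,k}$ are its coefficient matrices. A commutative smABP is one whose coefficient matrices all pairwise commute. For $f \in \mathbb{C}[\mathbf{x}]$, $\mathrm{DPD}(f) := \dim_{\mathbb{C}}\mathrm{span}_{\mathbb{C}}\{\partial_{\mathbf{e}} f : \mathbf{e}\}$ is the dimension of the span of all partial derivatives of $f$ of all orders (including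 $f$ itself), where $\partial_{\mathbf{e}} f$ is the partial derivative with respect to the monomial $\mathbf{x}^{\mathbf{e}}$. *)

theory Defs
  imports "Jordan_Normal_Form.Matrix" "HOL-Library.Function_Algebras"
begin

text \<open>Polynomials in C[x] over variables of type 'v are represented by their coefficient
  functions: a polynomial is a map from exponent vectors (monomials) ('v => nat)
  to coefficients.  Variables x_{j,k} are the pairs (j,k) with j < d and k < n j
  (0-based indices).\<close>

type_synonym 'v cpoly = "('v \<Rightarrow> nat) \<Rightarrow> complex"

definition sm_mono :: "nat \<Rightarrow> (nat \<Rightarrow> nat) \<Rightarrow> (nat \<times> nat \<Rightarrow> nat)" where
  "sm_mono d s = (\<lambda>(j,k). if j < d \<and> k = s j then 1 else 0)"

definition set_multilinear :: "nat \<Rightarrow> (nat \<Rightarrow> nat) \<Rightarrow> (nat \<times> nat) cpoly \<Rightarrow> bool" where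
  "set_multilinear d n f \<longleftrightarrow>
     (\<forall>m. f m \<noteq> 0 \<longrightarrow> (\<exists>s. (\<forall>j<d. s j < n j) \<and> m = sm_mono d s))"

text \<open>Partial derivative of f with respect to the monomial x^e:
  coefficient of x^m in it is (prod_v (m_v+1)...(m_v+e_v)) * coeff of x^(m+e) in f.\<close>
definition pdiff :: "('v \<Rightarrow> nat) \<Rightarrow> 'v cpoly \<Rightarrow> 'v cpoly" where
  "pdiff e f = (\<lambda>m. (\<Prod>v\<in>{v. e v \<noteq> 0}. pochhammer (of_nat (m v + 1)) (e v)) * f (\<lambda>v. m v + e v))"

definition DPD :: "'v cpoly \<Rightarrow> nat" where
  "DPD f = vector_space.dim (\<lambda>(c::complex) (g::'v cpoly). (\<lambda>m. c * g m))
            {pdiff e f | e. finite {v. e v \<noteq> 0}}"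

text \<open>Polynomial computed by the smABP u^T M_{\<sigma> 0}(x_{\<sigma> 0}) ... M_{\<sigma>(d-1)}(x_{\<sigma>(d-1)}) v,
  where M_j(x_j) = sum_{k < n j} A j k * x_{j,k}.  Expanding the product of sums, the
  coefficient of each monomial is the sum over the choices s (one variable per part) giving it.\<close>
definition smABP_poly :: "nat \<Rightarrow> (nat \<Rightarrow> nat) \<Rightarrow> nat \<Rightarrow> (nat \<Rightarrow> nat)
     \<Rightarrow> (nat \<Rightarrow> nat \<Rightarrow> complex mat) \<Rightarrow> complex vec \<Rightarrow> complex vec \<Rightarrow> (nat \<times> nat) cpoly" where
  "smABP_poly d n w \<sigma> A u v = (\<lambda>m.
     \<Sum>s\<in>Pi\<^sub>E {..<d} (\<lambda>j. {..<n j}).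
       (if m = sm_mono d s
        then u \<bullet> (foldr (*) (map (\<lambda>i. A (\<sigma> i) (s (\<sigma> i))) [0..<d]) (1\<^sub>m w) *\<^sub>v v)
        else 0))"

definition comm_smABP :: "nat \<Rightarrow> (nat \<Rightarrow> nat) \<Rightarrow> (nat \<times> nat) cpoly \<Rightarrow> nat \<Rightarrow> bool" where
  "comm_smABP d n f w \<longleftrightarrow>
     (\<exists>\<sigma> A u v. \<sigma> permutes {..<d}
        \<and> (\<forall>j<d. \<forall>k<n j. A j k \<in> carrier_mat w w)
        \<and> (\<forall>j<d. \<forall>k<n j. \<forall>j'<d. \<forall>k'<n j'. A j k * A j' k' = A j' k' * A j k)
        \<and> u \<in> carrier_vec w \<and> v \<in> carrier_vec w
        \<and> smABP_poly d n w \<sigma> A u v = f)"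

end

theory Submission
  imports Defs
begin

definition Dv :: "'v \<Rightarrow> 'v cpoly \<Rightarrow> 'v cpoly" where
  "Dv v g = (\<lambda>m. of_nat (Suc (m v)) * g (m(v := Suc (m v))))"

interpretation fs: vector_space "(\<lambda>(c::complex) (g::'a \<Rightarrow> complex). (\<lambda>m. c * g m))"
  by unfold_locales (auto simp: fun_eq_iff algebra_simps)

lemma sum_fun_apply: "(\<Sum>i\<in>I. F i) x = (\<Sum>i\<in>I. F i x)"
  by (induction I rule: infinite_finite_induct) auto

lemma Dv_sum: "Dv v (\<Sum>i\<in>I. F i) = (\<Sum>i\<in>I. Dv v (F i))"
  by (rule ext) (simp add: Dv_def sum_fun_apply sum_distrib_left)

lemma Dv_scale: "Dv v (\<lambda>m. c * g m) = (\<lambda>m. c * Dv v g m)"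
  by (rule ext) (simp add: Dv_def)

lemma Dv_comm: "Dv v (Dv w g) = Dv w (Dv v g)"
  by (rule ext) (auto simp: Dv_def fun_upd_twist)

lemma Dv_pdiff:
  assumes fin: "finite {w. e w \<noteq> 0}"
  shows "Dv v (pdiff e f) = pdiff (e(v := Suc (e v))) f"
proof (rule ext)
  fix m :: "'a \<Rightarrow> nat"
  define Z where "Z = {w. e w \<noteq> 0}"
  define m' where "m' = m(v := Suc (m v))"
  define e' where "e' = e(v := Suc (e v))"
  define F where "F = (\<lambda>w. pochhammer (of_nat (m w + 1)) (e w) :: complex)"
  define F' where "F' = (\<lambda>w. pochhammer (of_nat (m' w + 1)) (e w) :: complex)"
  have Z': "{w. e' w \<noteq> 0} = insert v Z" by (auto simp: e'_def Z_def)
  have finZ: "finite Z" using fin Z_def by simp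
  have p1: "(\<Prod>w\<in>Z. F' w) = F' v * (\<Prod>w\<in>Z - {v}. F' w)"
  proof (cases "v \<in> Z")
    case True then show ?thesis using finZ by (simp add: prod.remove)
  next
    case False then have "e v = 0" by (simp add: Z_def)
    then show ?thesis using False by (simp add: F'_def)
  qed
  have p2: "(\<Prod>w\<in>Z - {v}. F' w) = (\<Prod>w\<in>Z - {v}. F w)"
    by (rule prod.cong) (auto simp: F_def F'_def m'_def)
  have p3: "(\<Prod>w\<in>insert v Z. pochhammer (of_nat (m w + 1)) (e' w)) =
      pochhammer (of_nat (m v + 1)) (Suc (e v)) * (\<Prod>w\<in>Z - {v}. F w)"
  proof -
    have "(\<Prod>w\<in>Z - {v}. pochhammer (of_nat (m w + 1)) (e' w)) = (\<Prod>w\<in>Z - {v}. F w)"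
      by (rule prod.cong) (auto simp: e'_def F_def)
    then show ?thesis using finZ by (simp add: prod.insert_remove e'_def)
  qed
  have p4: "of_nat (Suc (m v)) * F' v = pochhammer (of_nat (m v + 1)) (Suc (e v))"
    by (simp add: F'_def m'_def pochhammer_rec add_ac)
  have ar: "(\<lambda>w. m' w + e w) = (\<lambda>w. m w + e' w)"
    by (auto simp: m'_def e'_def)
  have "Dv v (pdiff e f) m = of_nat (Suc (m v)) * ((\<Prod>w\<in>Z. F' w) * f (\<lambda>w. m' w + e w))"
    by (simp add: Dv_def pdiff_def Z_def F'_def m'_def)
  also have "\<dots> = pochhammer (of_nat (m v + 1)) (Suc (e v)) * (\<Prod>w\<in>Z - {v}. F w) * f (\<lambda>w. m w + e' w)"
    using p1 p2 p4 ar by (simp add: mult_ac)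
  also have "\<dots> = pdiff e' f m"
    using p3 Z' by (simp add: pdiff_def)
  finally show "Dv v (pdiff e f) m = pdiff (e(v := Suc (e v))) f m" by (simp add: e'_def)
qed

lemma foldr_Dv:
  "distinct ws \<Longrightarrow> (\<forall>x\<in>set ws. m x = 0) \<Longrightarrow>
    foldr Dv ws g m = g (\<lambda>x. m x + (if x \<in> set ws then 1 else 0))"
proof (induction ws arbitrary: m)
  case Nil then show ?case by simp
next
  case (Cons w ws)
  have "foldr Dv (w # ws) g m = foldr Dv ws g (m(w := 1))"
    using Cons.prems by (simp add: Dv_def)
  also have "\<dots> = g (\<lambda>x. (m(w := 1)) x + (if x \<in> set ws then 1 else 0))"
  proof -
    have "\<forall>x\<in>set ws. (m(w := 1)) x = 0" using Cons.prems by auto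
    then show ?thesis using Cons.IH Cons.prems by auto
  qed
  also have "(\<lambda>x. (m(w := 1)) x + (if x \<in> set ws then 1 else 0)) =
      (\<lambda>x. m x + (if x \<in> set (w # ws) then 1 else 0))"
    using Cons.prems by (auto simp: fun_eq_iff)
  finally show ?case .
qed

theorem theorem1p6:
  fixes d :: nat and n :: "nat \<Rightarrow> nat" and f :: "(nat \<times> nat) cpoly"
  assumes "set_multilinear d n f"
  shows "(\<exists>w. comm_smABP d n f w) \<and> (LEAST w. comm_smABP d n f w) \<le> DPD f"
proof -
  define P where "P = {pdiff e f | e. finite {v. e v \<noteq> 0}}"
  have DPD: "DPD f = fs.dim P" by (simp add: DPD_def P_def)
  obtain B where BP: "B \<subseteq> P" and indB: "fs.independent B" and PB: "P \<subseteq> fs.span B"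
    and cardB: "card B = fs.dim P"
    using fs.basis_exists[of P] by blast
  define Vars where "Vars = Sigma {..<d} (\<lambda>j. {..<n j})"
  define S where "S = {m :: nat \<times> nat \<Rightarrow> nat. \<forall>x. (x \<in> Vars \<longrightarrow> m x \<in> {0,1}) \<and> (x \<notin> Vars \<longrightarrow> m x = 0)}"
  have finS: "finite S" unfolding S_def
    by (rule finite_set_of_finite_funs) (auto simp: Vars_def)
  define delta where "delta = (\<lambda>m0 (m :: nat \<times> nat \<Rightarrow> nat). if m = m0 then (1::complex) else 0)"
  have supp: "m \<in> S" if "pdiff e f m \<noteq> 0" for e m
  proof -
    from that have "f (\<lambda>v. m v + e v) \<noteq> 0" by (simp add: pdiff_def)
    with assms obtain s where s: "\<forall>j<d. s j < n j" "(\<lambda>v. m v + e v) = sm_mono d s"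
      unfolding set_multilinear_def by blast
    have le: "m (j,k) \<le> (if j < d \<and> k = s j then 1 else 0)" for j k
      using fun_cong[OF s(2), of "(j,k)"] by (simp add: sm_mono_def)
    have "(x \<in> Vars \<longrightarrow> m x \<in> {0,1}) \<and> (x \<notin> Vars \<longrightarrow> m x = 0)" for x
    proof -
      obtain j k where x: "x = (j,k)" by fastforce
      show ?thesis using le[of j k] s(1) unfolding x Vars_def
        by (cases "j < d \<and> k = s j") auto
    qed
    then show ?thesis unfolding S_def by blast
  qed
  have Pspan: "P \<subseteq> fs.span (delta ` S)"
  proof
    fix g assume "g \<in> P"
    then obtain e where g: "g = pdiff e f" unfolding P_def by blast
    have "g = (\<Sum>m0\<in>S. (\<lambda>m. g m0 * delta m0 m))"
    proof (rule ext)
      fix m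
      have "(\<Sum>m0\<in>S. (\<lambda>m. g m0 * delta m0 m)) m = (\<Sum>m0\<in>S. g m0 * delta m0 m)"
        by (simp add: sum_fun_apply)
      also have "\<dots> = (if m \<in> S then g m else 0)"
        using finS by (simp add: delta_def if_distrib[of "\<lambda>x. _ * x"] sum.delta cong: if_cong)
      also have "\<dots> = g m" using supp g by auto
      finally show "g m = (\<Sum>m0\<in>S. (\<lambda>m. g m0 * delta m0 m)) m" by simp
    qed
    also have "\<dots> \<in> fs.span (delta ` S)"
      by (intro fs.span_sum fs.span_scale fs.span_base) auto
    finally show "g \<in> fs.span (delta ` S)" .
  qed
  have finB: "finite B"
    using fs.independent_span_bound[OF finite_imageI[OF finS] indB] BP Pspan
      fs.span_mono[of B] by blast
  define D where "D = card B"
  obtain bb where bb: "bij_betw bb {..<D} B"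
    using ex_bij_betw_nat_finite[OF finB] unfolding D_def atLeast0LessThan by blast
  have bbB: "bb l \<in> B" if "l < D" for l using bb that bij_betwE by blast
  have Bspan: "B \<subseteq> fs.span B" by (rule fs.span_superset)
  have DvP: "Dv v g \<in> P" if "g \<in> P" for v g
  proof -
    from that obtain e where g: "g = pdiff e f" "finite {v. e v \<noteq> 0}" unfolding P_def by blast
    have "finite {w. (e(v := Suc (e v))) w \<noteq> 0}"
      by (rule rev_finite_subset[of "insert v {v. e v \<noteq> 0}"]) (use g(2) in auto)
    then show ?thesis unfolding P_def g(1) Dv_pdiff[OF g(2)] by blast
  qed
  have fP: "f \<in> P"
  proof -
    have "pdiff (\<lambda>_. 0) f = f" by (simp add: pdiff_def)
    then show ?thesis unfolding P_def by (metis (mono_tags, lifting) Collect_empty_eq finite.emptyI mem_Collect_eq)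
  qed
  define c where "c = (\<lambda>g i. fs.representation B g (bb i))"
  have expand: "g = (\<Sum>l<D. (\<lambda>m. c g l * bb l m))" if "g \<in> fs.span B" for g
  proof -
    have "g = (\<Sum>b\<in>B. (\<lambda>m. fs.representation B g b * b m))"
      using fs.sum_representation_eq[OF indB that finB subset_refl] by simp
    also have "\<dots> = (\<Sum>l<D. (\<lambda>m. c g l * bb l m))"
      unfolding c_def by (rule sum.reindex_bij_betw[OF bb, symmetric])
    finally show ?thesis .
  qed
  have spanDv: "Dv v g \<in> fs.span B" if "g \<in> fs.span B" for v g
  proof -
    have "Dv v g = (\<Sum>l<D. (\<lambda>m. c g l * Dv v (bb l) m))"
      by (subst expand[OF that]) (simp add: Dv_sum Dv_scale)
    also have "\<dots> \<in> fs.span B"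
      using bbB BP PB DvP by (intro fs.span_sum fs.span_scale) blast
    finally show ?thesis .
  qed
  have bDv: "Dv v (bb l) \<in> fs.span B" if "l < D" for v l
    using spanDv bbB[OF that] Bspan by blast
  have repsc: "fs.representation B (\<lambda>m. a * g m) = (\<lambda>b. a * fs.representation B g b)"
    if "g \<in> fs.span B" for a g
    using fs.representation_scale[OF indB that] by simp
  have coordDv: "c (Dv v g) i = (\<Sum>l<D. c g l * c (Dv v (bb l)) i)" if g: "g \<in> fs.span B" for v g i
  proof -
    have "Dv v g = (\<Sum>l<D. (\<lambda>m. c g l * Dv v (bb l) m))"
      by (subst expand[OF g]) (simp add: Dv_sum Dv_scale)
    then have "c (Dv v g) i = fs.representation B (\<Sum>l<D. (\<lambda>m. c g l * Dv v (bb l) m)) (bb i)"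
      by (simp add: c_def)
    also have "\<dots> = (\<Sum>l<D. fs.representation B (\<lambda>m. c g l * Dv v (bb l) m) (bb i))"
      by (subst fs.representation_sum[OF indB]) (simp_all add: fs.span_scale bDv)
    also have "\<dots> = (\<Sum>l<D. c g l * c (Dv v (bb l)) i)"
      using bDv by (intro sum.cong refl) (auto simp: repsc c_def)
    finally show ?thesis .
  qed
  define Am where "Am = (\<lambda>v. mat D D (\<lambda>(i,l). c (Dv v (bb l)) i))"
  have Am_car: "Am v \<in> carrier_mat D D" for v by (simp add: Am_def)
  have Am_vec: "Am v *\<^sub>v vec D (c g) = vec D (c (Dv v g))" if g: "g \<in> fs.span B" for v g
  proof (rule eq_vecI)
    fix i assume "i < dim_vec (vec D (c (Dv v g)))"
    then have i: "i < D" by simp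
    show "(Am v *\<^sub>v vec D (c g)) $ i = vec D (c (Dv v g)) $ i"
      using i by (simp add: Am_def scalar_prod_def coordDv[OF g] mult.commute atLeast0LessThan)
  qed (simp add: Am_def)
  have Am_comm: "Am v * Am w = Am w * Am v" for v w
  proof -
    have ent: "(Am v * Am w) $$ (i,l) = c (Dv v (Dv w (bb l))) i" if "i < D" "l < D" for v w i l
    proof -
      have "(Am v * Am w) $$ (i,l) = (Am v *\<^sub>v vec D (c (Dv w (bb l)))) $ i"
        using that by (simp add: Am_def)
      also have "\<dots> = c (Dv v (Dv w (bb l))) i"
        using that bDv by (subst Am_vec) auto
      finally show ?thesis .
    qed
    have dr: "dim_row (Am w * Am v) = D" "dim_col (Am w * Am v) = D"
      "dim_row (Am v * Am w) = D" "dim_col (Am v * Am w) = D"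
      by (simp_all add: Am_def)
    show ?thesis
    proof (rule eq_matI)
      fix i l assume "i < dim_row (Am w * Am v)" "l < dim_col (Am w * Am v)"
      then have il: "i < D" "l < D" using dr by auto
      show "(Am v * Am w) $$ (i, l) = (Am w * Am v) $$ (i, l)"
        by (simp only: ent[OF il] Dv_comm)
    qed (simp_all only: dr)
  qed
  have fold_car: "foldr (*) (map Am ws) (1\<^sub>m D) \<in> carrier_mat D D" for ws
  proof (induction ws)
    case (Cons w ws) then show ?case using Am_car[of w] by (simp add: mult_carrier_mat)
  qed simp
  have fold_span: "foldr Dv ws g \<in> fs.span B" if "g \<in> fs.span B" for ws g
    using that by (induction ws) (auto intro: spanDv)
  have fold_vec: "foldr (*) (map Am ws) (1\<^sub>m D) *\<^sub>v vec D (c g) = vec D (c (foldr Dv ws g))"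
    if "g \<in> fs.span B" for ws g
  proof (induction ws)
    case Nil then show ?case by simp
  next
    case (Cons w ws)
    have "foldr (*) (map Am (w # ws)) (1\<^sub>m D) *\<^sub>v vec D (c g)
        = Am w *\<^sub>v (foldr (*) (map Am ws) (1\<^sub>m D) *\<^sub>v vec D (c g))"
      using assoc_mult_mat_vec[OF Am_car[of w] fold_car[of ws], of "vec D (c g)"] by simp
    also have "\<dots> = vec D (c (foldr Dv (w # ws) g))"
      using Cons Am_vec fold_span[OF that] by simp
    finally show ?case .
  qed
  define uu where "uu = vec D (\<lambda>i. bb i (\<lambda>_. 0))"
  have uu_prod: "uu \<bullet> vec D (c h) = h (\<lambda>_. 0)" if "h \<in> fs.span B" for h
  proof -
    have "uu \<bullet> vec D (c h) = (\<Sum>l<D. c h l * bb l (\<lambda>_. 0))"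
      by (simp add: uu_def scalar_prod_def atLeast0LessThan mult.commute)
    also have "\<dots> = h (\<lambda>_. 0)"
      by (subst (2) expand[OF that]) (simp add: sum_fun_apply)
    finally show ?thesis .
  qed
  define A where "A = (\<lambda>j k. Am (j,k))"
  define vv where "vv = vec D (c f)"
  have fspan: "f \<in> fs.span B" using fP PB by blast
  have termeq: "uu \<bullet> (foldr (*) (map (\<lambda>i. A (id i) (s (id i))) [0..<d]) (1\<^sub>m D) *\<^sub>v vv)
      = f (sm_mono d s)" for s
  proof -
    define ws where "ws = map (\<lambda>i. (i, s i)) [0..<d]"
    have mp: "map (\<lambda>i. A (id i) (s (id i))) [0..<d] = map Am ws"
      by (simp add: ws_def A_def)
    have dist: "distinct ws" unfolding ws_def by (simp add: distinct_map inj_on_def)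
    have ind: "(\<lambda>x. (0::nat) + (if x \<in> set ws then 1 else 0)) = sm_mono d s"
    proof (rule ext)
      fix x :: "nat \<times> nat"
      obtain j k where x: "x = (j,k)" by fastforce
      have "x \<in> set ws \<longleftrightarrow> j < d \<and> k = s j" unfolding x ws_def by auto
      then show "(0::nat) + (if x \<in> set ws then 1 else 0) = sm_mono d s x"
        by (simp add: sm_mono_def x)
    qed
    have "uu \<bullet> (foldr (*) (map (\<lambda>i. A (id i) (s (id i))) [0..<d]) (1\<^sub>m D) *\<^sub>v vv)
        = foldr Dv ws f (\<lambda>_. 0)"
      unfolding mp vv_def fold_vec[OF fspan] by (rule uu_prod[OF fold_span[OF fspan]])
    also have "\<dots> = f (sm_mono d s)"
      using foldr_Dv[OF dist, of "\<lambda>_. 0" f] ind by simp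
    finally show ?thesis .
  qed
  have sm_inj: "s = s'" if "s \<in> Pi\<^sub>E {..<d} (\<lambda>j. {..<n j})" "s' \<in> Pi\<^sub>E {..<d} (\<lambda>j. {..<n j})"
    "sm_mono d s = sm_mono d s'" for s s'
  proof -
    have "s j = s' j" if j: "j < d" for j
      using fun_cong[OF \<open>sm_mono d s = sm_mono d s'\<close>, of "(j, s j)"] j
      by (simp add: sm_mono_def split: if_splits)
    then show ?thesis using that(1,2) by (intro PiE_ext) auto
  qed
  have poly: "smABP_poly d n D id A uu vv = f"
  proof (rule ext)
    fix m
    have "smABP_poly d n D id A uu vv m =
        (\<Sum>s\<in>Pi\<^sub>E {..<d} (\<lambda>j. {..<n j}). if m = sm_mono d s then f m else 0)"
      unfolding smABP_poly_def id_apply by (intro sum.cong refl) (simp only: termeq[unfolded id_apply] split: if_split, simp)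
    also have "\<dots> = f m"
    proof (cases "\<exists>s0\<in>Pi\<^sub>E {..<d} (\<lambda>j. {..<n j}). m = sm_mono d s0")
      case True
      then obtain s0 where s0: "s0 \<in> Pi\<^sub>E {..<d} (\<lambda>j. {..<n j})" "m = sm_mono d s0" by blast
      have "(\<Sum>s\<in>Pi\<^sub>E {..<d} (\<lambda>j. {..<n j}). if m = sm_mono d s then f m else 0)
          = (\<Sum>s\<in>Pi\<^sub>E {..<d} (\<lambda>j. {..<n j}). if s = s0 then f m else 0)"
      proof (intro sum.cong refl)
        fix s assume "s \<in> Pi\<^sub>E {..<d} (\<lambda>j. {..<n j})"
        then have "m = sm_mono d s \<longleftrightarrow> s = s0" using sm_inj[of s s0] s0 by metis
        then show "(if m = sm_mono d s then f m else 0) = (if s = s0 then f m else 0)" by simp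
      qed
      also have "\<dots> = f m" using s0(1) by (simp add: finite_PiE)
      finally show ?thesis .
    next
      case False
      have "f m = 0"
      proof (rule ccontr)
        assume "f m \<noteq> 0"
        with assms obtain s where s: "\<forall>j<d. s j < n j" "m = sm_mono d s"
          unfolding set_multilinear_def by blast
        have "restrict s {..<d} \<in> Pi\<^sub>E {..<d} (\<lambda>j. {..<n j})" using s(1) by auto
        moreover have "sm_mono d (restrict s {..<d}) = sm_mono d s"
          by (rule ext) (auto simp: sm_mono_def split: prod.splits)
        ultimately show False using False s(2) by metis
      qed
      moreover have "\<forall>s\<in>Pi\<^sub>E {..<d} (\<lambda>j. {..<n j}). (if m = sm_mono d s then f m else 0) = 0"
        using False by auto
      ultimately show ?thesis by simp
    qed
    finally show "smABP_poly d n D id A uu vv m = f m" .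
  qed
  have cs: "comm_smABP d n f D"
    unfolding comm_smABP_def
  proof (intro exI conjI)
    show "id permutes {..<d}" by (rule permutes_id)
    show "\<forall>j<d. \<forall>k<n j. A j k \<in> carrier_mat D D" by (simp add: A_def Am_car)
    show "\<forall>j<d. \<forall>k<n j. \<forall>j'<d. \<forall>k'<n j'. A j k * A j' k' = A j' k' * A j k"
      by (simp add: A_def Am_comm)
    show "uu \<in> carrier_vec D" "vv \<in> carrier_vec D" by (simp_all add: uu_def vv_def)
    show "smABP_poly d n D id A uu vv = f" by (rule poly)
  qed
  have "(LEAST w. comm_smABP d n f w) \<le> D" by (rule Least_le[of "comm_smABP d n f", OF cs])
  then have "(LEAST w. comm_smABP d n f w) \<le> DPD f" unfolding DPD D_def cardB .
  then show ?thesis using cs by blast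
qed
end
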